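(* For $0\le z<1$ define $$P_{\chi^2(1)}(z)=\frac{1}{\pi}\cos^{-1}(z),\qquad P_{\chi^2(2)}(z)=\frac{1}{2}-\frac{2}{\pi^2}\int_0^{\pi/2}\tan^{-1}\!\left(\frac{z}{2-2z}\tan t\right)dt,$$ and set $P_{\chi^2(2)}(1)=0$ (its limit as $z\to1$). Then $P_{\chi^2(2)}(z)\le P_{\chi^2(1)}(z)$ for all $z\in[0,1]$.
   Context: $\cos^{-1}$ is the principal arccosine with values in $[0,\pi]$; $\tan^{-1}$ is the principal arctangent. *)

theory Defs
  imports "HOL-Analysis.Analysis"
begin

definition P_chi1 :: "real \<Rightarrow> real" where
  "P_chi1 z = (1 / pi) * arccos z"

definition P_chi2 :: "real \<Rightarrow> real" where
  "P_chi2 z = (if z = 1 then 0 else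
     1/2 - (2 / pi^2) * integral {0..pi/2} (\<lambda>t. arctan (z / (2 - 2*z) * tan t)))"

end

theory Submission
  imports Defs
begin

lemma arctan_cubic_lower:
  fixes y :: real assumes "0 \<le> y" shows "y - y^3/3 \<le> arctan y"
proof -
  let ?h = "\<lambda>y::real. arctan y - y + y^3/3"
  have "?h 0 \<le> ?h y"
  proof (rule DERIV_nonneg_imp_nondecreasing[OF assms])
    fix x :: real assume "0 \<le> x" "x \<le> y"
    have "(?h has_real_derivative (1/(1+x^2) - 1 + x^2)) (at x)"
      by (auto intro!: derivative_eq_intros simp: field_simps)
    moreover have "1/(1+x^2) - 1 + x^2 \<ge> 0"
    proof -
      have d: "1 + x*x \<noteq> 0" by (smt (verit) zero_le_square)
      have "1/(1+x^2) - 1 + x^2 = x^4/(1+x^2)"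
        using d by (simp add: field_simps power2_eq_square power4_eq_xxxx)
      moreover have "x^4/(1+x^2) \<ge> 0" by simp
      ultimately show "1/(1+x^2) - 1 + x^2 \<ge> 0" by simp
    qed
    ultimately show "\<exists>d. (?h has_real_derivative d) (at x) \<and> 0 \<le> d" by blast
  qed
  thus ?thesis by simp
qed

lemma partA:
  fixes a :: real assumes a: "a > 0"
  shows "(\<lambda>t. arctan(a*tan t)) integrable_on {0..arctan(1/a)}"
    and "integral {0..arctan(1/a)} (\<lambda>t. arctan(a*tan t)) \<ge> (a/2 + a^3/6) * ln(1 + 1/a^2) - a/6"
proof -
  define t0 where "t0 = arctan(1/a)"
  have t0: "0 < t0" "t0 < pi/2" using a arctan_ubound by (auto simp: t0_def)
  have cpos: "cos t > 0" if "t \<in> {0..t0}" for t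
    using that t0 by (intro cos_gt_zero_pi) auto
  have tnn: "tan t \<ge> 0" if "t \<in> {0..t0}" for t
    using that t0 cpos[OF that] by (auto simp: tan_def intro!: divide_nonneg_pos sin_ge_zero)
  have cont: "continuous_on {0..t0} (\<lambda>t. arctan(a*tan t))"
    using cpos by (intro continuous_intros) (auto simp: less_imp_neq[symmetric])
  show int1: "(\<lambda>t. arctan(a*tan t)) integrable_on {0..arctan(1/a)}"
    using integrable_continuous_interval[OF cont] by (simp add: t0_def)
  define phi where "phi t = a*tan t - (a*tan t)^3/3" for t
  define F where "F t = -(a + a^3/3) * ln(cos t) - a^3 * (tan t)^2 / 6" for t
  have contphi: "continuous_on {0..t0} phi"
    unfolding phi_def using cpos by (intro continuous_intros) (auto simp: less_imp_neq[symmetric])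
  have der: "(F has_real_derivative phi t) (at t)" if "t \<in> {0..t0}" for t
  proof -
    have c: "cos t > 0" using cpos[OF that] .
    have s2: "sin t ^ 2 = 1 - cos t ^ 2" by (simp add: sin_squared_eq)
    have s3: "sin t ^ 3 = sin t * (1 - cos t ^ 2)" by (metis s2 power3_eq_cube power2_eq_square mult.assoc mult.commute)
    show ?thesis unfolding F_def phi_def
      apply (rule derivative_eq_intros refl | use c in force)+
      using c by (simp add: tan_def field_simps s2 s3) algebra
  qed
  have "(phi has_integral (F t0 - F 0)) {0..t0}"
    using t0 der by (intro fundamental_theorem_of_calculus)
      (auto simp: has_real_derivative_iff_has_vector_derivative[symmetric] intro: has_field_derivative_at_within)
  hence iphi: "integral {0..t0} phi = F t0 - F 0" by (rule integral_unique)
  have "F t0 = (a/2 + a^3/6) * ln(1 + 1/a^2) - a/6"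
  proof -
    have "cos t0 = 1 / sqrt (1 + (1/a)^2)" by (simp add: t0_def cos_arctan)
    hence lc: "ln (cos t0) = - ln (1 + 1/a^2) / 2"
      by (simp add: ln_div ln_sqrt power_one_over add_pos_nonneg)
    have tt: "tan t0 = 1/a" by (simp add: t0_def tan_arctan)
    show ?thesis using a unfolding F_def lc tt by (simp add: field_simps power2_eq_square power3_eq_cube)
  qed
  moreover have "F 0 = 0" by (simp add: F_def)
  ultimately have iphi2: "integral {0..t0} phi = (a/2 + a^3/6) * ln(1 + 1/a^2) - a/6"
    using iphi by simp
  have "integral {0..t0} phi \<le> integral {0..t0} (\<lambda>t. arctan(a*tan t))"
  proof (rule integral_le)
    show "phi integrable_on {0..t0}" by (rule integrable_continuous_interval[OF contphi])
    show "(\<lambda>t. arctan(a*tan t)) integrable_on {0..t0}" using int1 by (simp add: t0_def)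
    fix t assume "t \<in> {0..t0}"
    thus "phi t \<le> arctan(a*tan t)"
      unfolding phi_def using tnn a by (intro arctan_cubic_lower) auto
  qed
  thus "integral {0..arctan(1/a)} (\<lambda>t. arctan(a*tan t)) \<ge> (a/2 + a^3/6) * ln(1 + 1/a^2) - a/6"
    using iphi2 by (simp add: t0_def)
qed

lemma arctan_one_over: "x > 0 \<Longrightarrow> arctan (1/x) = pi/2 - arctan x"
  using arctan_inverse[of x] by (simp add: inverse_eq_divide)

lemma partB:
  fixes a :: real assumes a: "a > 0"
  shows "(\<lambda>t. arctan(a*tan t)) integrable_on {arctan(1/a)..pi/2}"
    and "integral {arctan(1/a)..pi/2} (\<lambda>t. arctan(a*tan t)) \<ge> pi/2*arctan a - ln(1+1/a^2)/(2*a) - ln a / a"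
proof -
  define t0 where "t0 = arctan(1/a)"
  have t0: "0 < t0" "t0 < pi/2" using a arctan_ubound by (auto simp: t0_def)
  have spos: "sin t > 0" if "t \<in> {t0..pi/2}" for t
    using that t0 by (intro sin_gt_zero) auto
  define g where "g t = pi/2 - arctan(cos t/(a * sin t))" for t
  have contg: "continuous_on {t0..pi/2} g"
    unfolding g_def using spos a by (intro continuous_intros) (auto simp: less_imp_neq[symmetric])
  have eq: "g t = arctan(a*tan t)" if "t \<in> {t0..pi/2} - {pi/2}" for t
  proof -
    have t: "0 < t" "t < pi/2" using that t0 by auto
    have tp: "a * tan t > 0" using a tan_gt_zero[OF t] by simp
    have "arctan(1/(a*tan t)) = pi/2 - arctan(a*tan t)" using arctan_one_over[OF tp] .
    moreover have "1/(a*tan t) = cos t/(a * sin t)" by (simp add: tan_def)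
    ultimately show ?thesis unfolding g_def by simp
  qed
  have intg: "g integrable_on {t0..pi/2}" by (rule integrable_continuous_interval[OF contg])
  have int1: "(\<lambda>t. arctan(a*tan t)) integrable_on {t0..pi/2}"
    by (rule integrable_spike[OF intg negligible_sing[of "pi/2"]]) (use eq in force)
  show "(\<lambda>t. arctan(a*tan t)) integrable_on {arctan(1/a)..pi/2}" using int1 by (simp add: t0_def)
  have ieq: "integral {t0..pi/2} (\<lambda>t. arctan(a*tan t)) = integral {t0..pi/2} g"
    by (rule integral_spike[OF negligible_sing[of "pi/2"]]) (use eq in force)
  define phi where "phi t = pi/2 - cos t/(a * sin t)" for t
  define F where "F t = pi/2*t - ln(sin t)/a" for t
  have contphi: "continuous_on {t0..pi/2} phi"
    unfolding phi_def using spos a by (intro continuous_intros) (auto simp: less_imp_neq[symmetric])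
  have der: "(F has_real_derivative phi t) (at t)" if "t \<in> {t0..pi/2}" for t
  proof -
    have c: "sin t > 0" using spos[OF that] .
    show ?thesis unfolding F_def phi_def
      using c a by (auto intro!: derivative_eq_intros simp: field_simps)
  qed
  have "(phi has_integral (F (pi/2) - F t0)) {t0..pi/2}"
    using t0 der by (intro fundamental_theorem_of_calculus)
      (auto simp: has_real_derivative_iff_has_vector_derivative[symmetric] intro: has_field_derivative_at_within)
  hence iphi: "integral {t0..pi/2} phi = F (pi/2) - F t0" by (rule integral_unique)
  have "F (pi/2) - F t0 = pi/2*arctan a - ln(1+1/a^2)/(2*a) - ln a / a"
  proof -
    have "sin t0 = (1/a) / sqrt (1 + (1/a)^2)" by (simp add: t0_def sin_arctan)
    hence st: "sin t0 = 1/(a * sqrt(1+1/a^2))" by (simp add: power_one_over)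
    have yp: "0 < 1 + 1/a^2" by (simp add: add_pos_nonneg)
    have ls: "ln (sin t0) = - ln a - ln (1 + 1/a^2) / 2"
      unfolding st using a yp by (simp add: ln_div ln_mult ln_sqrt)
    have tt: "t0 = pi/2 - arctan a" using arctan_one_over[OF a] by (simp add: t0_def)
    show ?thesis using a unfolding F_def ls by (simp add: tt field_simps)
  qed
  hence iphi2: "integral {t0..pi/2} phi = pi/2*arctan a - ln(1+1/a^2)/(2*a) - ln a / a"
    using iphi by simp
  have "integral {t0..pi/2} phi \<le> integral {t0..pi/2} g"
  proof (rule integral_le)
    show "phi integrable_on {t0..pi/2}" by (rule integrable_continuous_interval[OF contphi])
    show "g integrable_on {t0..pi/2}" by (rule intg)
    fix t assume t: "t \<in> {t0..pi/2}"
    have "cos t \<ge> 0" using t t0 by (intro cos_ge_zero) auto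
    hence "cos t/(a * sin t) \<ge> 0" using spos[OF t] a by simp
    thus "phi t \<le> g t"
      unfolding phi_def g_def using arctan_le_self by smt
  qed
  thus "integral {arctan(1/a)..pi/2} (\<lambda>t. arctan(a*tan t)) \<ge> pi/2*arctan a - ln(1+1/a^2)/(2*a) - ln a / a"
    using iphi2 ieq by (simp add: t0_def)
qed

definition S :: "nat \<Rightarrow> real \<Rightarrow> real" where
  "S n q = (\<Sum>k<n. q^(2*k+1)/(2*k+1))"

lemma S_deriv: "((S n) has_real_derivative (\<Sum>k<n. (x^2)^k)) (at x)"
  unfolding S_def
proof (rule DERIV_sum)
  fix k assume "k \<in> {..<n}"
  have "((\<lambda>q. q^(2*k+1)) has_real_derivative real (2*k+1) * x^(2*k)) (at x)"
    using DERIV_pow[of "2*k+1" x] by simp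
  hence "((\<lambda>q. q^(2*k+1)/(2*k+1)) has_real_derivative real (2*k+1) * x^(2*k)/(2*k+1)) (at x)"
    by (rule DERIV_cdivide)
  thus "((\<lambda>q. q^(2*k+1)/(2*k+1)) has_real_derivative (x^2)^k) (at x)"
    by (simp add: power_mult)
qed

lemma geo_sq: "(1 - x^2) * (\<Sum>k<n. (x^2)^k) = 1 - (x^2)^n" for x :: real
  using one_diff_power_eq[of "x^2" n] by simp

lemma atanh_lower:
  fixes q :: real assumes q: "0 \<le> q" "q < 1"
  shows "2 * S n q \<le> ln (1+q) - ln (1-q)"
proof -
  let ?h = "\<lambda>q. ln (1+q) - ln (1-q) - 2 * S n q"
  have "?h 0 \<le> ?h q"
  proof (rule DERIV_nonneg_imp_nondecreasing[OF q(1)])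
    fix x :: real assume x: "0 \<le> x" "x \<le> q"
    hence x1: "x < 1" using q by simp
    have dS: "(S n has_real_derivative (\<Sum>k<n. (x^2)^k)) (at x)" by (rule S_deriv)
    have dl: "((\<lambda>q. ln (1+q) - ln (1-q)) has_real_derivative (1/(1+x) - (-1)/(1-x))) (at x)"
      using x x1 by (auto intro!: derivative_eq_intros)
    have "(?h has_real_derivative (1/(1+x) - (-1)/(1-x) - 2 * (\<Sum>k<n. (x^2)^k))) (at x)"
      by (intro DERIV_diff DERIV_cmult dS dl)
    moreover have "1/(1+x) - (-1)/(1-x) - 2 * (\<Sum>k<n. (x^2)^k) \<ge> 0"
    proof -
      have p: "1 - x^2 > 0" using x x1 by (simp add: abs_square_less_1)
      have sig: "(\<Sum>k<n. (x^2)^k) = (1 - (x^2)^n)/(1-x^2)"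
        using geo_sq[of x n] p by (simp add: field_simps)
      have l2: "1/(1+x) - (-1)/(1-x) = 2/(1-x^2)"
        using x x1 by (simp add: field_simps power2_eq_square)
      have "1/(1+x) - (-1)/(1-x) - 2 * (\<Sum>k<n. (x^2)^k) = 2/(1-x^2) - 2*(1 - (x^2)^n)/(1-x^2)"
        unfolding sig l2 by simp
      also have "\<dots> = (2 - 2*(1 - (x^2)^n))/(1-x^2)" by (simp add: diff_divide_distrib)
      also have "\<dots> = 2 * (x^2)^n / (1-x^2)" by simp
      finally have "1/(1+x) - (-1)/(1-x) - 2 * (\<Sum>k<n. (x^2)^k) = 2 * (x^2)^n / (1-x^2)" .
      thus ?thesis using p by simp
    qed
    ultimately show "\<exists>d. (?h has_real_derivative d) (at x) \<and> 0 \<le> d" by blast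
  qed
  thus ?thesis by (simp add: S_def)
qed

lemma atanh_upper:
  fixes q :: real assumes q: "0 \<le> q" "q < 1"
  shows "ln (1+q) - ln (1-q) \<le> 2 * S n q + 2 * q^(2*n+1) / (real (2*n+1) * (1-q^2))"
proof -
  define c where "c = real (2*n+1)"
  have cpos: "c > 0" by (simp add: c_def)
  let ?h = "\<lambda>q. 2 * S n q + 2 * (q^(2*n+1) / (c * (1-q^2))) - (ln (1+q) - ln (1-q))"
  have "?h 0 \<le> ?h q"
  proof (rule DERIV_nonneg_imp_nondecreasing[OF q(1)])
    fix x :: real assume x: "0 \<le> x" "x \<le> q"
    hence x1: "x < 1" using q by simp
    have p: "1 - x^2 > 0" using x x1 by (simp add: abs_square_less_1)
    define P where "P = (x^2)^n"
    have P0: "P \<ge> 0" by (simp add: P_def)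
    have d1: "((\<lambda>q. q^(2*n+1)) has_real_derivative c * P) (at x)"
      using DERIV_pow[of "2*n+1" x] by (simp add: c_def P_def power_mult)
    have d2: "((\<lambda>q. c * (1-q^2)) has_real_derivative c * (- (2*x))) (at x)"
      by (auto intro!: derivative_eq_intros)
    have g0: "c * (1-x^2) \<noteq> 0" using cpos p by simp
    have d3: "((\<lambda>q. q^(2*n+1) / (c * (1-q^2))) has_real_derivative
        ((c * P) * (c * (1-x^2)) - x^(2*n+1) * (c * (- (2*x)))) / ((c * (1-x^2)) * (c * (1-x^2)))) (at x)"
      by (rule DERIV_divide[OF d1 d2 g0])
    have dS: "(S n has_real_derivative (\<Sum>k<n. (x^2)^k)) (at x)" by (rule S_deriv)
    have dl: "((\<lambda>q. ln (1+q) - ln (1-q)) has_real_derivative (1/(1+x) + 1/(1-x))) (at x)"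
      using x x1 by (auto intro!: derivative_eq_intros simp: field_simps)
    define D where "D = 2 * (\<Sum>k<n. (x^2)^k) + 2 * (((c * P) * (c * (1-x^2)) - x^(2*n+1) * (c * (- (2*x)))) / ((c * (1-x^2)) * (c * (1-x^2)))) - (1/(1+x) + 1/(1-x))"
    have "(?h has_real_derivative D) (at x)"
      unfolding D_def by (intro DERIV_diff DERIV_add DERIV_cmult dS d3 dl)
    moreover have "D \<ge> 0"
    proof -
      have sig: "(\<Sum>k<n. (x^2)^k) = (1 - P)/(1-x^2)"
        using geo_sq[of x n] p by (simp add: P_def field_simps)
      have x21: "x^(2*n+1) = x * P" by (simp add: P_def power_mult)
      have l2: "1/(1+x) + 1/(1-x) = 2/(1-x^2)"
        using x x1 by (simp add: field_simps power2_eq_square)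
      have alg: "\<And>m. m \<noteq> 0 \<Longrightarrow> 2*((1-P)/m) + 2*(((c*P)*(c*m) - (x*P)*(c*(-(2*x))))/((c*m)*(c*m))) - 2/m = 4*P*x^2/(c*m^2)"
        using cpos by (simp add: field_simps power2_eq_square)
      have "D = 4 * P * x^2 / (c * (1-x^2)^2)"
        unfolding D_def sig x21 l2 using p by (intro alg) simp
      thus ?thesis using P0 cpos p by simp
    qed
    ultimately show "\<exists>d. (?h has_real_derivative d) (at x) \<and> 0 \<le> d" by blast
  qed
  thus ?thesis by (simp add: S_def c_def)
qed

definition PL :: real where "PL = 3.141592653588"
definition PU :: real where "PU = 3.1415926535899"
definition LNlo :: "real \<Rightarrow> real" where "LNlo y = 2 * S 4 ((y-1)/(y+1))"
definition LNup :: "real \<Rightarrow> real" where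
  "LNup y = 2 * S 4 ((y-1)/(y+1)) + 2 * ((y-1)/(y+1))^9 / (9 * (1 - ((y-1)/(y+1))^2))"
definition ATL :: "real \<Rightarrow> real" where "ATL x = (\<Sum>k<2*1. (- 1) ^ k * (1 / real (k * 2 + 1) * x ^ (k * 2 + 1)))"
definition ATU :: "real \<Rightarrow> real" where "ATU x = (\<Sum>k<2*1+1. (- 1) ^ k * (1 / real (k * 2 + 1) * x ^ (k * 2 + 1)))"

definition cert :: "real \<Rightarrow> real \<Rightarrow> real \<Rightarrow> real" where
  "cert a a' s' = (let u = 2*a'/s'; d = (a-u)/(1+a*u);
     t = (if 0 \<le> d then PL/2 * ATL d else - (PU/2) * ATU (-d));
     cL = a/2 + a^3/6 - 1/(2*a);
     r = (if cL \<le> 0 \<and> a \<le> 1 then cL * LNup (1+a^2) + (a + a^3/3) * LNlo (1/a)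
          else if a \<le> 1 then cL * LNlo (1+1/a^2) + LNlo (1/a) / a
          else cL * LNlo (1+1/a^2) - LNup a / a)
     in if \<bar>d\<bar> < 1 then t + r - a/6 else -1)"

lemma ln_bounds:
  fixes y :: real assumes y: "1 \<le> y"
  shows "LNlo y \<le> ln y" "ln y \<le> LNup y"
proof -
  define q where "q = (y-1)/(y+1)"
  have q: "0 \<le> q" "q < 1" using y by (auto simp: q_def field_simps)
  have "ln (1+q) - ln (1-q) = ln ((1+q)/(1-q))" using q by (simp add: ln_div)
  also have "(1+q)/(1-q) = y" using y by (simp add: q_def field_simps)
  finally have e: "ln (1+q) - ln (1-q) = ln y" .
  show "LNlo y \<le> ln y" using atanh_lower[OF q, of 4] e by (simp add: LNlo_def q_def)
  show "ln y \<le> LNup y" using atanh_upper[OF q, of 4] e by (simp add: LNup_def q_def)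
qed

lemma arctan_sub:
  fixes a u :: real assumes "0 < a" "0 < u"
  shows "arctan a - arctan u = arctan ((a-u)/(1+a*u))"
proof -
  have "\<bar>arctan a + arctan (-u)\<bar> < pi/2"
  proof -
    have p: "0 < arctan a" "0 < arctan u" using assms by simp_all
    have e: "arctan (-u) = - arctan u" by (rule arctan_minus)
    show ?thesis unfolding e abs_less_iff using p arctan_ubound[of a] arctan_ubound[of u] by linarith
  qed
  from arctan_add_raw[OF this] show ?thesis by (simp add: arctan_minus)
qed

lemma AT_bounds:
  fixes x :: real assumes "0 \<le> x" "x < 1"
  shows "ATL x \<le> arctan x" "arctan x \<le> ATU x"
  using arctan_bounds[OF assms, of 1] by (simp_all add: ATL_def ATU_def)

definition B1 :: "real \<Rightarrow> real" where
  "B1 a = pi/2*arctan a + (a/2 + a^3/6 - 1/(2*a)) * ln(1+1/a^2) - ln a / a - a/6"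

lemma step:
  fixes a a' s' :: real
  assumes a: "0 < a" and a': "0 < a'" and s': "0 < s'" and c: "0 \<le> cert a a' s'"
  shows "pi/2 * arctan (2*a'/s') \<le> B1 a"
proof -
  define u where "u = 2*a'/s'"
  define d where "d = (a-u)/(1+a*u)"
  define t where "t = (if 0 \<le> d then PL/2 * ATL d else - (PU/2) * ATU (-d))"
  define cL where "cL = a/2 + a^3/6 - 1/(2*a)"
  define r where "r = (if cL \<le> 0 \<and> a \<le> 1 then cL * LNup (1+a^2) + (a + a^3/3) * LNlo (1/a)
          else if a \<le> 1 then cL * LNlo (1+1/a^2) + LNlo (1/a) / a
          else cL * LNlo (1+1/a^2) - LNup a / a)"
  have u: "0 < u" using a' s' by (simp add: u_def)
  have cert_eq: "cert a a' s' = (if \<bar>d\<bar> < 1 then t + r - a/6 else -1)"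
    unfolding cert_def Let_def u_def[symmetric] d_def[symmetric] t_def[symmetric] cL_def[symmetric] r_def[symmetric] ..
  have d1: "\<bar>d\<bar> < 1" using c cert_eq by (auto split: if_splits)
  have cval: "0 \<le> t + r - a/6" using c cert_eq d1 by simp
  have pil: "PL \<le> pi" and piu: "pi \<le> PU" using pi_approx by (simp_all add: PL_def PU_def)
  have tle: "t \<le> pi/2 * arctan d"
  proof (cases "0 \<le> d")
    case True
    have "ATL d \<le> arctan d" using AT_bounds(1)[of d] True d1 by simp
    moreover have "0 \<le> arctan d" using True by simp
    ultimately have "PL/2 * ATL d \<le> pi/2 * arctan d"
    proof -
      assume h1: "ATL d \<le> arctan d" and h2: "0 \<le> arctan d"
      have "PL/2 * ATL d \<le> PL/2 * arctan d" using h1 by (simp add: PL_def mult_left_mono)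
      also have "\<dots> \<le> pi/2 * arctan d" using h2 pil by (simp add: mult_right_mono)
      finally show ?thesis .
    qed
    thus ?thesis using True by (simp add: t_def)
  next
    case False
    have h: "arctan (-d) \<le> ATU (-d)" using AT_bounds(2)[of "-d"] False d1 by simp
    have h0: "0 \<le> arctan (-d)" using False by simp
    hence "0 \<le> ATU (-d)" using h by linarith
    hence "pi/2 * ATU (-d) \<le> PU/2 * ATU (-d)" using piu by (simp add: mult_right_mono)
    moreover have "pi/2 * arctan (-d) \<le> pi/2 * ATU (-d)" using h by (simp add: pi_gt_zero)
    ultimately show ?thesis using False by (simp add: t_def arctan_minus)
  qed
  define l1 where "l1 = ln (1 + 1/a^2)"
  define l where "l = ln a"
  have l1eq: "l1 = ln (1+a^2) - 2*l"
  proof -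
    have "1 + 1/a^2 = (1+a^2)/a^2" using a by (simp add: field_simps)
    moreover have "0 < 1 + a^2" by (simp add: add_pos_nonneg)
    ultimately have "l1 = ln (1+a^2) - ln (a^2)" using a by (simp add: l1_def ln_div)
    thus ?thesis using a by (simp add: l_def ln_realpow)
  qed
  have rle: "r \<le> cL * l1 - l/a"
  proof -
    have lo_inv: "LNlo (1/a) \<le> - l" if "a \<le> 1" using ln_bounds(1)[of "1/a"] that a by (simp add: l_def ln_div)
    show ?thesis
    proof (cases "cL \<le> 0 \<and> a \<le> 1")
      case True
      have L1: "ln (1+a^2) \<le> LNup (1+a^2)" by (rule ln_bounds(2)) simp
      have "cL * LNup (1+a^2) \<le> cL * ln (1+a^2)" using True L1 by (simp add: mult_left_mono_neg)
      moreover have "(a + a^3/3) * LNlo (1/a) \<le> (a + a^3/3) * (-l)"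
        using lo_inv True a by (intro mult_left_mono) auto
      moreover have "cL * l1 - l/a = cL * ln (1+a^2) + (a + a^3/3) * (-l)"
        unfolding l1eq cL_def using a by (simp add: field_simps power3_eq_cube)
      ultimately show ?thesis using True by (simp add: r_def)
    next
      case False
      have cLpos: "0 \<le> cL"
      proof (cases "a \<le> 1")
        case True thus ?thesis using False by simp
      next
        case F: False
        hence "1 \<le> a * a" using a by (metis less_le_not_le linorder_not_le mult_le_cancel_right1 mult_nonneg_nonneg zero_le_one order_trans)
        hence "1/(2*a) \<le> a/2" using a by (simp add: field_simps)
        moreover have "0 \<le> a^3/6" using a by simp
        ultimately show ?thesis unfolding cL_def by linarith
      qed
      have L1: "LNlo (1+1/a^2) \<le> l1" unfolding l1_def by (rule ln_bounds(1)) simp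
      have A: "cL * LNlo (1+1/a^2) \<le> cL * l1" using cLpos L1 by (simp add: mult_left_mono)
      show ?thesis
      proof (cases "a \<le> 1")
        case True
        have "LNlo (1/a) / a \<le> (-l)/a" using lo_inv[OF True] a by (intro divide_right_mono) auto
        hence "LNlo (1/a) / a \<le> - (l/a)" by simp
        moreover have "r = cL * LNlo (1+1/a^2) + LNlo (1/a) / a" using False True by (simp add: r_def)
        ultimately show ?thesis using A by linarith
      next
        case F: False
        have "l \<le> LNup a" unfolding l_def by (rule ln_bounds(2)) (use F in simp)
        hence "l/a \<le> LNup a / a" using a by (simp add: divide_right_mono)
        moreover have "r = cL * LNlo (1+1/a^2) - LNup a / a" using False F by (simp add: r_def)
        ultimately show ?thesis using A by linarith
      qed
    qed
  qed
  have "B1 a - pi/2 * arctan u = pi/2 * arctan d + (cL * l1 - l/a) - a/6"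
    unfolding B1_def d_def cL_def l1_def l_def using arctan_sub[OF a u] by (simp add: algebra_simps)
  hence "B1 a - pi/2 * arctan u \<ge> t + r - a/6" using tle rle by simp
  thus ?thesis using cval by (simp add: u_def)
qed

definition II :: "real \<Rightarrow> real" where
  "II a = integral {0..pi/2} (\<lambda>t. arctan (a * tan t))"

lemma t0_bounds: "0 < a \<Longrightarrow> 0 \<le> arctan (1/a) \<and> arctan (1/a) \<le> pi/2"
  using arctan_ubound[of "1/a"] by (simp add: less_imp_le)

lemma II_integrable: "0 < a \<Longrightarrow> (\<lambda>t. arctan (a * tan t)) integrable_on {0..pi/2}"
  using Henstock_Kurzweil_Integration.integrable_combine[OF _ _ partA(1) partB(1)] t0_bounds by blast

lemma INT: assumes a: "0 < a" shows "B1 a \<le> II a"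
proof -
  have "II a = integral {0..arctan(1/a)} (\<lambda>t. arctan (a * tan t)) + integral {arctan(1/a)..pi/2} (\<lambda>t. arctan (a * tan t))"
    unfolding II_def using Henstock_Kurzweil_Integration.integral_combine[OF _ _ II_integrable[OF a]] t0_bounds[OF a] by simp
  thus ?thesis using partA(2)[OF a] partB(2)[OF a] unfolding B1_def by (simp add: algebra_simps)
qed

lemma tan_nonneg_half: "t \<in> {0..pi/2} \<Longrightarrow> 0 \<le> tan (t::real)"
proof -
  assume t: "t \<in> {0..pi/2}"
  have "0 \<le> sin t" using t by (intro sin_ge_zero) auto
  moreover have "0 \<le> cos t" using t by (intro cos_ge_zero) auto
  ultimately show ?thesis by (simp add: tan_def)
qed

lemma MONO: assumes "0 < a" "a \<le> b" shows "II a \<le> II b"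
  unfolding II_def
proof (rule integral_le)
  show "(\<lambda>t. arctan (a * tan t)) integrable_on {0..pi/2}" by (rule II_integrable) fact
  show "(\<lambda>t. arctan (b * tan t)) integrable_on {0..pi/2}" by (rule II_integrable) (use assms in simp)
  fix t assume "t \<in> {0..pi/2}"
  hence "0 \<le> tan t" by (rule tan_nonneg_half)
  hence "a * tan t \<le> b * tan t" using assms by (simp add: mult_right_mono)
  thus "arctan (a * tan t) \<le> arctan (b * tan t)" by (simp add: arctan_le_iff)
qed

lemma N_at:
  fixes a s :: real assumes a: "0 < a" and s: "0 < s" "s^2 = 1 + 4*a"
  shows "arcsin (2*a/(1+2*a)) = arctan (2*a/s)"
proof -
  have p: "0 < 1 + 2*a" using a by simp
  have D: "(1+2*a)^2 > 0" using p by simp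
  have "1 - (2*a/(1+2*a))^2 = ((1+2*a)^2 - (2*a)^2)/(1+2*a)^2"
    using D by (simp add: power_divide field_simps)
  also have "\<dots> = s^2/(1+2*a)^2" using s by (simp add: power2_eq_square algebra_simps)
  also have "\<dots> = (s/(1+2*a))^2" by (simp add: power_divide)
  finally have "1 - (2*a/(1+2*a))^2 = (s/(1+2*a))^2" .
  hence "sqrt (1 - (2*a/(1+2*a))^2) = s/(1+2*a)" using s p by simp
  moreover have "-1 < 2*a/(1+2*a)" "2*a/(1+2*a) < 1" using a p by (simp_all add: field_simps)
  ultimately show ?thesis using arcsin_arctan p by (simp add: field_simps)
qed

lemma GRID:
  fixes a0 a1 s1 a :: real
  assumes a0: "0 < a0" and a: "a0 \<le> a" "a \<le> a1" and s1: "0 < s1" "s1^2 = 1 + 4*a1"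
    and c: "0 \<le> cert a0 a1 s1"
  shows "pi/2 * arcsin (2*a/(1+2*a)) \<le> II a"
proof -
  have apos: "0 < a" "0 < a1" using a0 a by auto
  have m: "2*a/(1+2*a) \<le> 2*a1/(1+2*a1)" using apos a by (simp add: field_simps)
  have l: "-1 \<le> 2*a/(1+2*a)" and r: "2*a1/(1+2*a1) \<le> 1" using apos by (simp_all add: field_simps)
  have "arcsin (2*a/(1+2*a)) \<le> arcsin (2*a1/(1+2*a1))" by (rule arcsin_le_arcsin[OF l m r])
  also have "\<dots> = arctan (2*a1/s1)" by (rule N_at[OF apos(2) s1])
  finally have "pi/2 * arcsin (2*a/(1+2*a)) \<le> pi/2 * arctan (2*a1/s1)" by simp
  also have "\<dots> \<le> B1 a0" by (rule step[OF a0 apos(2) s1(1) c])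
  also have "\<dots> \<le> II a0" by (rule INT[OF a0])
  also have "\<dots> \<le> II a" by (rule MONO[OF a0 a(1)])
  finally show ?thesis .
qed

lemma B1_alt:
  assumes a: "0 < a"
  shows "B1 a = pi/2*arctan a + (a/2 + a^3/6 - 1/(2*a)) * ln (1+a^2) - (a + a^3/3) * ln a - a/6"
proof -
  have "1 + 1/a^2 = (1+a^2)/a^2" using a by (simp add: field_simps)
  moreover have "0 < 1 + a^2" by (simp add: add_pos_nonneg)
  ultimately have e: "ln (1 + 1/a^2) = ln (1+a^2) - 2 * ln a" using a by (simp add: ln_div ln_realpow)
  show ?thesis unfolding B1_def e using a by (simp add: field_simps power3_eq_cube)
qed

lemma small_tail:
  fixes a :: real assumes a: "0 < a" "a \<le> 17/256"
  shows "pi/2 * arcsin (2*a/(1+2*a)) \<le> II a"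
proof -
  define s where "s = sqrt (1+4*a)"
  have s: "0 < s" "s^2 = 1+4*a" using a by (simp_all add: s_def)
  have s1: "1 \<le> s" using a by (simp add: s_def)
  have "arcsin (2*a/(1+2*a)) = arctan (2*a/s)" by (rule N_at[OF a(1) s])
  also have "\<dots> \<le> 2*a/s" using a s by (intro arctan_le_self) simp
  also have "\<dots> \<le> 2*a" using a s1 by (simp add: divide_le_eq mult_le_cancel_left1)  
  finally have N: "pi/2 * arcsin (2*a/(1+2*a)) \<le> pi * a" by (simp add: pi_gt_zero)
  define cL where "cL = a/2 + a^3/6 - 1/(2*a)"
  have cLn: "cL \<le> 0"
  proof -
    have "a^3/6 \<le> a/6" using a by (simp add: power3_eq_cube mult_le_cancel_right1 mult_le_one)
    moreover have "4 * a \<le> 1/a"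
    proof -
      have "a * a \<le> (17/256) * (17/256)" using a by (intro mult_mono) auto
      hence "4 * a * a \<le> 1" by simp
      thus ?thesis using a by (simp add: field_simps)
    qed
    moreover have "1/(2*a) = (1/a)/2" by simp
    moreover have "0 < 1/a" using a by simp
    ultimately show ?thesis unfolding cL_def by linarith
  qed
  have at: "a - a^3/3 \<le> arctan a" using a by (intro arctan_cubic_lower) simp
  have L: "ln (1+a^2) \<le> a^2" by (rule ln_add_one_self_le_self) simp
  hence cLL: "cL * a^2 \<le> cL * ln (1+a^2)" using cLn by (simp add: mult_left_mono_neg)
  have "5/2 \<le> LNlo (256/17)" by (simp add: LNlo_def S_def eval_nat_numeral)
  also have "\<dots> \<le> ln (256/17)" by (rule ln_bounds(1)) simp
  also have "\<dots> \<le> ln (1/a)" using a by (subst ln_le_cancel_iff) (simp_all add: field_simps)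
  also have "\<dots> = - ln a" using a by (simp add: ln_div)
  finally have la: "5/2 \<le> - ln a" .
  have A: "(a + a^3/3) * (5/2) \<le> (a + a^3/3) * (- ln a)" using la a by (intro mult_left_mono) auto
  have A2: "(a + a^3/3) * (- ln a) = - ((a + a^3/3) * ln a)" by simp
  have B: "pi/2*(a - a^3/3) \<le> pi/2*arctan a" using at by (intro mult_left_mono) (auto simp: pi_gt_zero less_imp_le)
  have "pi/2*(a - a^3/3) + cL * a^2 + (a + a^3/3) * (5/2) - a/6 \<le> B1 a"
    unfolding B1_alt[OF a(1)] cL_def[symmetric] using cLL A A2 B by linarith
  moreover have "pi * a \<le> pi/2*(a - a^3/3) + cL * a^2 + (a + a^3/3) * (5/2) - a/6"
  proof -
    have e: "pi/2*(a - a^3/3) + cL * a^2 + (a + a^3/3) * (5/2) - a/6 - pi * a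
         = a * ((11/6 - pi/2) + a^2 * (4/3 - pi/6) + a^4/6)"
      unfolding cL_def using a by (simp add: field_simps power2_eq_square power3_eq_cube power4_eq_xxxx)
    have "pi < 3.2" using pi_approx by simp
    hence "0 \<le> (11/6 - pi/2) + a^2 * (4/3 - pi/6) + a^4/6" by simp
    hence "0 \<le> a * ((11/6 - pi/2) + a^2 * (4/3 - pi/6) + a^4/6)" using a by simp
    thus ?thesis using e by simp
  qed
  ultimately show ?thesis using N INT[OF a(1)] by linarith
qed

lemma large_tail:
  fixes a :: real assumes a: "63/4 \<le> a"
  shows "pi/2 * arcsin (2*a/(1+2*a)) \<le> II a"
proof -
  have a0: "0 < a" using a by simp
  define s where "s = sqrt (1+4*a)"
  have s: "0 < s" "s^2 = 1+4*a" using a0 by (simp_all add: s_def)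
  have s8: "8 \<le> s"
  proof -
    have "sqrt 64 \<le> s" unfolding s_def using a by (subst real_sqrt_le_iff) simp
    moreover have "sqrt 64 = (8::real)" by (simp add: real_sqrt_unique)
    ultimately show ?thesis by simp
  qed
  define u where "u = 2*a/s"
  have us: "u * s = 2*a" using s by (simp add: u_def)
  have u0: "0 < u" using a0 s by (simp add: u_def)
  have N: "arcsin (2*a/(1+2*a)) = arctan u" unfolding u_def by (rule N_at[OF a0 s])
  have u_lo: "31/8 \<le> u"
  proof -
    have "8 * 1 \<le> s * (4* s - 31)" using s8 by (intro mult_mono) auto
    hence "31 * s \<le> 4 * s^2 - 4" by (simp add: algebra_simps power2_eq_square)
    hence "31 * s \<le> 16 * a" using s by simp
    hence "31/8 * s \<le> u * s" using us by simp
    thus ?thesis using s by simp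
  qed
  have s_le_a: "s \<le> a"
  proof -
    have h: "15 * 1 \<le> a * (a - 4)" using a by (intro mult_mono) auto
    have e: "a * (a - 4) = a^2 - 4 * a" by (simp add: algebra_simps power2_eq_square)
    have "s^2 \<le> a^2" using h e s(2) by linarith
    thus ?thesis by (rule power2_le_imp_le) (use a0 in linarith)
  qed
  have u_le: "u \<le> a/4"
  proof -
    have "u * 8 \<le> u * s" using s8 u0 by (intro mult_left_mono) auto
    thus ?thesis using us by linarith
  qed
  define d where "d = (a-u)/(1+a*u)"
  have den: "0 < 1 + a*u" using a0 u0 by (simp add: add_pos_pos)
  have d0: "0 \<le> d" using u_le a0 den by (simp add: d_def)
  have d_le: "d \<le> 8/31"
  proof -
    have "d \<le> 1/u" unfolding d_def using a0 u0 den by (simp add: field_simps)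
    also have "\<dots> \<le> 8/31" using u_lo by (simp add: field_simps)
    finally show ?thesis .
  qed
  have atd: "2819/2883 * d \<le> arctan d"
  proof -
    have "d^2 \<le> (8/31)^2" using d0 d_le by (intro power_mono) auto
    moreover have "(8/31::real)^2 = 64/961" by (simp add: power2_eq_square)
    ultimately have "2819/2883 \<le> 1 - d^2/3" by linarith
    hence "d * (2819/2883) \<le> d * (1 - d^2/3)" using d0 by (rule mult_left_mono)
    moreover have "d * (1 - d^2/3) = d - d^3/3" by (simp add: algebra_simps power2_eq_square power3_eq_cube)
    ultimately have "2819/2883 * d \<le> d - d^3/3" by (simp add: mult.commute)
    thus ?thesis using arctan_cubic_lower[OF d0] by simp
  qed
  have ad: "9/25 * s \<le> a * d"
  proof -
    have "12 * s \<le> a * a" using s_le_a a0 a s by (intro mult_mono) auto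
    moreover have "s * (a*u) = 2*a*a" using us by (simp add: algebra_simps)
    moreover have "a*u \<le> a*(a/4)" using u_le a0 by (simp add: mult_left_mono)
    moreover have "9/25 * s * (1 + a*u) = 9/25* s + 9/25*(s*(a*u))" by (simp add: algebra_simps)
    moreover have "a*(a-u) = a*a - a*u" by (simp add: algebra_simps)
    ultimately have "9/25 * s * (1 + a*u) \<le> a * (a - u)" by linarith
    thus ?thesis unfolding d_def using den by (simp add: field_simps)
  qed
  have atd2: "7/20 * s \<le> a * arctan d"
  proof -
    have "a * (2819/2883 * d) \<le> a * arctan d" using atd a0 by (simp add: mult_left_mono)
    moreover have "2819/2883 * (9/25 * s) \<le> 2819/2883 * (a*d)" using ad by simp
    ultimately show ?thesis using s by (simp add: algebra_simps)
  qed
  define cL where "cL = a/2 + a^3/6 - 1/(2*a)"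
  define x where "x = 1/a^2"
  have x0: "0 \<le> x" "x \<le> 16/3969"
  proof -
    show "0 \<le> x" by (simp add: x_def)
    have "(63/4)^2 \<le> a^2" using a by (intro power_mono) auto
    thus "x \<le> 16/3969" unfolding x_def using a0 by (simp add: field_simps)
  qed
  have cL0: "0 \<le> cL"
  proof -
    have "1 * 1 \<le> a * a" using a by (intro mult_mono) auto
    hence "1/(2*a) \<le> a/2" using a0 by (simp add: field_simps)
    moreover have "0 \<le> a^3/6" using a0 by simp
    ultimately show ?thesis unfolding cL_def by linarith
  qed
  have l1: "x - x^2 \<le> ln (1 + x)" using x0 by (intro ln_one_plus_pos_lower_bound) auto
  have l1b: "3/10 \<le> a * cL * ln (1 + x) - a^2/6"
  proof -
    have "a * cL * (x - x^2) \<le> a * cL * ln (1+x)" using l1 cL0 a0 by (simp add: mult_left_mono)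
    moreover have "a * cL * (x - x^2) - a^2/6 = 1/3 - x + x^2/2"
      unfolding cL_def x_def using a0 by (simp add: field_simps power2_eq_square power3_eq_cube power4_eq_xxxx)
    moreover have "3/10 \<le> 1/3 - x + x^2/2" using x0 zero_le_power2[of x] by linarith
    ultimately show ?thesis by linarith
  qed
  have ln4: "ln (4::real) \<le> 1387/1000"
  proof -
    have "ln (4::real) \<le> LNup 4" by (rule ln_bounds(2)) simp
    also have "\<dots> \<le> 1387/1000" by (simp add: LNup_def S_def eval_nat_numeral)
    finally show ?thesis .
  qed
  have la: "ln a \<le> 774/1000 + s/4"
  proof -
    define r where "r = sqrt a"
    have r0: "0 < r" using a0 by (simp add: r_def)
    have r2: "r^2 = a" using a0 by (simp add: r_def)
    have "ln a = 2 * ln r" using ln_realpow[of r 2] r0 r2 by simp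
    moreover have "ln r = ln 4 + ln (r/4)" using r0 by (simp add: ln_div)
    moreover have "ln (r/4) \<le> r/4 - 1" using r0 by (intro ln_le_minus_one) simp
    moreover have "r \<le> s/2"
    proof -
      have "(s/2)^2 = s^2/4" by (simp add: power_divide)
      hence "r^2 \<le> (s/2)^2" using r2 s(2) by linarith
      thus ?thesis by (rule power2_le_imp_le) (use s(1) in linarith)
    qed
    ultimately show ?thesis using ln4 by linarith
  qed
  have "B1 a - pi/2 * arctan u = pi/2 * arctan d + cL * ln (1 + x) - ln a / a - a/6"
    unfolding B1_def d_def cL_def x_def using arctan_sub[OF a0 u0] by (simp add: algebra_simps)
  hence eq: "a * (B1 a - pi/2 * arctan u) = pi/2 * (a * arctan d) + (a * cL * ln (1 + x) - a^2/6) - ln a"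
    using a0 by (simp add: field_simps power2_eq_square)
  have "3/2 * (7/20 * s) \<le> pi/2 * (a * arctan d)"
  proof -
    have "0 \<le> a * arctan d" using a0 d0 by simp
    hence "3/2 * (a * arctan d) \<le> pi/2 * (a * arctan d)" using pi_gt3 by (simp add: mult_right_mono)
    moreover have "3/2 * (7/20 * s) \<le> 3/2 * (a * arctan d)" using atd2 by simp
    ultimately show ?thesis by linarith
  qed
  hence "0 \<le> a * (B1 a - pi/2 * arctan u)" using eq l1b la s8 by linarith
  hence "pi/2 * arctan u \<le> B1 a" using a0 by (simp add: zero_le_mult_iff)
  thus ?thesis using N INT[OF a0] by simp
qed

lemma grid_0: assumes "17/256 \<le> a" "a \<le> 345/4096"
  shows "pi/2 * arcsin (2*a/(1+2*a)) \<le> II a"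
  by (rule GRID[of "17/256" a "345/4096" "37/32"])
     (use assms in \<open>simp_all add: cert_def Let_def LNlo_def LNup_def ATL_def ATU_def S_def PL_def PU_def eval_nat_numeral power2_eq_square\<close>)

lemma grid_1: assumes "345/4096 \<le> a" "a \<le> 105/1024"
  shows "pi/2 * arcsin (2*a/(1+2*a)) \<le> II a"
  by (rule GRID[of "345/4096" a "105/1024" "19/16"])
     (use assms in \<open>simp_all add: cert_def Let_def LNlo_def LNup_def ATL_def ATU_def S_def PL_def PU_def eval_nat_numeral power2_eq_square\<close>)

lemma grid_2: assumes "105/1024 \<le> a" "a \<le> 497/4096"
  shows "pi/2 * arcsin (2*a/(1+2*a)) \<le> II a"
  by (rule GRID[of "105/1024" a "497/4096" "39/32"])
     (use assms in \<open>simp_all add: cert_def Let_def LNlo_def LNup_def ATL_def ATU_def S_def PL_def PU_def eval_nat_numeral power2_eq_square\<close>)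

lemma grid_3: assumes "497/4096 \<le> a" "a \<le> 9/64"
  shows "pi/2 * arcsin (2*a/(1+2*a)) \<le> II a"
  by (rule GRID[of "497/4096" a "9/64" "5/4"])
     (use assms in \<open>simp_all add: cert_def Let_def LNlo_def LNup_def ATL_def ATU_def S_def PL_def PU_def eval_nat_numeral power2_eq_square\<close>)

lemma grid_4: assumes "9/64 \<le> a" "a \<le> 657/4096"
  shows "pi/2 * arcsin (2*a/(1+2*a)) \<le> II a"
  by (rule GRID[of "9/64" a "657/4096" "41/32"])
     (use assms in \<open>simp_all add: cert_def Let_def LNlo_def LNup_def ATL_def ATU_def S_def PL_def PU_def eval_nat_numeral power2_eq_square\<close>)

lemma grid_5: assumes "657/4096 \<le> a" "a \<le> 185/1024"
  shows "pi/2 * arcsin (2*a/(1+2*a)) \<le> II a"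
  by (rule GRID[of "657/4096" a "185/1024" "21/16"])
     (use assms in \<open>simp_all add: cert_def Let_def LNlo_def LNup_def ATL_def ATU_def S_def PL_def PU_def eval_nat_numeral power2_eq_square\<close>)

lemma grid_6: assumes "185/1024 \<le> a" "a \<le> 825/4096"
  shows "pi/2 * arcsin (2*a/(1+2*a)) \<le> II a"
  by (rule GRID[of "185/1024" a "825/4096" "43/32"])
     (use assms in \<open>simp_all add: cert_def Let_def LNlo_def LNup_def ATL_def ATU_def S_def PL_def PU_def eval_nat_numeral power2_eq_square\<close>)

lemma grid_7: assumes "825/4096 \<le> a" "a \<le> 3825/16384"
  shows "pi/2 * arcsin (2*a/(1+2*a)) \<le> II a"
  by (rule GRID[of "825/4096" a "3825/16384" "89/64"])
     (use assms in \<open>simp_all add: cert_def Let_def LNlo_def LNup_def ATL_def ATU_def S_def PL_def PU_def eval_nat_numeral power2_eq_square\<close>)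

lemma grid_8: assumes "3825/16384 \<le> a" "a \<le> 273/1024"
  shows "pi/2 * arcsin (2*a/(1+2*a)) \<le> II a"
  by (rule GRID[of "3825/16384" a "273/1024" "23/16"])
     (use assms in \<open>simp_all add: cert_def Let_def LNlo_def LNup_def ATL_def ATU_def S_def PL_def PU_def eval_nat_numeral power2_eq_square\<close>)

lemma grid_9: assumes "273/1024 \<le> a" "a \<le> 4929/16384"
  shows "pi/2 * arcsin (2*a/(1+2*a)) \<le> II a"
  by (rule GRID[of "273/1024" a "4929/16384" "95/64"])
     (use assms in \<open>simp_all add: cert_def Let_def LNlo_def LNup_def ATL_def ATU_def S_def PL_def PU_def eval_nat_numeral power2_eq_square\<close>)

lemma grid_10: assumes "4929/16384 \<le> a" "a \<le> 1377/4096"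
  shows "pi/2 * arcsin (2*a/(1+2*a)) \<le> II a"
  by (rule GRID[of "4929/16384" a "1377/4096" "49/32"])
     (use assms in \<open>simp_all add: cert_def Let_def LNlo_def LNup_def ATL_def ATU_def S_def PL_def PU_def eval_nat_numeral power2_eq_square\<close>)

lemma grid_11: assumes "1377/4096 \<le> a" "a \<le> 369/1024"
  shows "pi/2 * arcsin (2*a/(1+2*a)) \<le> II a"
  by (rule GRID[of "1377/4096" a "369/1024" "25/16"])
     (use assms in \<open>simp_all add: cert_def Let_def LNlo_def LNup_def ATL_def ATU_def S_def PL_def PU_def eval_nat_numeral power2_eq_square\<close>)

lemma grid_12: assumes "369/1024 \<le> a" "a \<le> 1577/4096"
  shows "pi/2 * arcsin (2*a/(1+2*a)) \<le> II a"
  by (rule GRID[of "369/1024" a "1577/4096" "51/32"])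
     (use assms in \<open>simp_all add: cert_def Let_def LNlo_def LNup_def ATL_def ATU_def S_def PL_def PU_def eval_nat_numeral power2_eq_square\<close>)

lemma grid_13: assumes "1577/4096 \<le> a" "a \<le> 105/256"
  shows "pi/2 * arcsin (2*a/(1+2*a)) \<le> II a"
  by (rule GRID[of "1577/4096" a "105/256" "13/8"])
     (use assms in \<open>simp_all add: cert_def Let_def LNlo_def LNup_def ATL_def ATU_def S_def PL_def PU_def eval_nat_numeral power2_eq_square\<close>)

lemma grid_14: assumes "105/256 \<le> a" "a \<le> 1785/4096"
  shows "pi/2 * arcsin (2*a/(1+2*a)) \<le> II a"
  by (rule GRID[of "105/256" a "1785/4096" "53/32"])
     (use assms in \<open>simp_all add: cert_def Let_def LNlo_def LNup_def ATL_def ATU_def S_def PL_def PU_def eval_nat_numeral power2_eq_square\<close>)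

lemma grid_15: assumes "1785/4096 \<le> a" "a \<le> 473/1024"
  shows "pi/2 * arcsin (2*a/(1+2*a)) \<le> II a"
  by (rule GRID[of "1785/4096" a "473/1024" "27/16"])
     (use assms in \<open>simp_all add: cert_def Let_def LNlo_def LNup_def ATL_def ATU_def S_def PL_def PU_def eval_nat_numeral power2_eq_square\<close>)

lemma grid_16: assumes "473/1024 \<le> a" "a \<le> 2001/4096"
  shows "pi/2 * arcsin (2*a/(1+2*a)) \<le> II a"
  by (rule GRID[of "473/1024" a "2001/4096" "55/32"])
     (use assms in \<open>simp_all add: cert_def Let_def LNlo_def LNup_def ATL_def ATU_def S_def PL_def PU_def eval_nat_numeral power2_eq_square\<close>)

lemma grid_17: assumes "2001/4096 \<le> a" "a \<le> 33/64"
  shows "pi/2 * arcsin (2*a/(1+2*a)) \<le> II a"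
  by (rule GRID[of "2001/4096" a "33/64" "7/4"])
     (use assms in \<open>simp_all add: cert_def Let_def LNlo_def LNup_def ATL_def ATU_def S_def PL_def PU_def eval_nat_numeral power2_eq_square\<close>)

lemma grid_18: assumes "33/64 \<le> a" "a \<le> 2225/4096"
  shows "pi/2 * arcsin (2*a/(1+2*a)) \<le> II a"
  by (rule GRID[of "33/64" a "2225/4096" "57/32"])
     (use assms in \<open>simp_all add: cert_def Let_def LNlo_def LNup_def ATL_def ATU_def S_def PL_def PU_def eval_nat_numeral power2_eq_square\<close>)

lemma grid_19: assumes "2225/4096 \<le> a" "a \<le> 585/1024"
  shows "pi/2 * arcsin (2*a/(1+2*a)) \<le> II a"
  by (rule GRID[of "2225/4096" a "585/1024" "29/16"])
     (use assms in \<open>simp_all add: cert_def Let_def LNlo_def LNup_def ATL_def ATU_def S_def PL_def PU_def eval_nat_numeral power2_eq_square\<close>)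

lemma grid_20: assumes "585/1024 \<le> a" "a \<le> 2457/4096"
  shows "pi/2 * arcsin (2*a/(1+2*a)) \<le> II a"
  by (rule GRID[of "585/1024" a "2457/4096" "59/32"])
     (use assms in \<open>simp_all add: cert_def Let_def LNlo_def LNup_def ATL_def ATU_def S_def PL_def PU_def eval_nat_numeral power2_eq_square\<close>)

lemma grid_21: assumes "2457/4096 \<le> a" "a \<le> 10545/16384"
  shows "pi/2 * arcsin (2*a/(1+2*a)) \<le> II a"
  by (rule GRID[of "2457/4096" a "10545/16384" "121/64"])
     (use assms in \<open>simp_all add: cert_def Let_def LNlo_def LNup_def ATL_def ATU_def S_def PL_def PU_def eval_nat_numeral power2_eq_square\<close>)

lemma grid_22: assumes "10545/16384 \<le> a" "a \<le> 705/1024"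
  shows "pi/2 * arcsin (2*a/(1+2*a)) \<le> II a"
  by (rule GRID[of "10545/16384" a "705/1024" "31/16"])
     (use assms in \<open>simp_all add: cert_def Let_def LNlo_def LNup_def ATL_def ATU_def S_def PL_def PU_def eval_nat_numeral power2_eq_square\<close>)

lemma grid_23: assumes "705/1024 \<le> a" "a \<le> 12033/16384"
  shows "pi/2 * arcsin (2*a/(1+2*a)) \<le> II a"
  by (rule GRID[of "705/1024" a "12033/16384" "127/64"])
     (use assms in \<open>simp_all add: cert_def Let_def LNlo_def LNup_def ATL_def ATU_def S_def PL_def PU_def eval_nat_numeral power2_eq_square\<close>)

lemma grid_24: assumes "12033/16384 \<le> a" "a \<le> 3201/4096"
  shows "pi/2 * arcsin (2*a/(1+2*a)) \<le> II a"
  by (rule GRID[of "12033/16384" a "3201/4096" "65/32"])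
     (use assms in \<open>simp_all add: cert_def Let_def LNlo_def LNup_def ATL_def ATU_def S_def PL_def PU_def eval_nat_numeral power2_eq_square\<close>)

lemma grid_25: assumes "3201/4096 \<le> a" "a \<le> 13593/16384"
  shows "pi/2 * arcsin (2*a/(1+2*a)) \<le> II a"
  by (rule GRID[of "3201/4096" a "13593/16384" "133/64"])
     (use assms in \<open>simp_all add: cert_def Let_def LNlo_def LNup_def ATL_def ATU_def S_def PL_def PU_def eval_nat_numeral power2_eq_square\<close>)

lemma grid_26: assumes "13593/16384 \<le> a" "a \<le> 225/256"
  shows "pi/2 * arcsin (2*a/(1+2*a)) \<le> II a"
  by (rule GRID[of "13593/16384" a "225/256" "17/8"])
     (use assms in \<open>simp_all add: cert_def Let_def LNlo_def LNup_def ATL_def ATU_def S_def PL_def PU_def eval_nat_numeral power2_eq_square\<close>)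

lemma grid_27: assumes "225/256 \<le> a" "a \<le> 15225/16384"
  shows "pi/2 * arcsin (2*a/(1+2*a)) \<le> II a"
  by (rule GRID[of "225/256" a "15225/16384" "139/64"])
     (use assms in \<open>simp_all add: cert_def Let_def LNlo_def LNup_def ATL_def ATU_def S_def PL_def PU_def eval_nat_numeral power2_eq_square\<close>)

lemma grid_28: assumes "15225/16384 \<le> a" "a \<le> 16353/16384"
  shows "pi/2 * arcsin (2*a/(1+2*a)) \<le> II a"
  by (rule GRID[of "15225/16384" a "16353/16384" "143/64"])
     (use assms in \<open>simp_all add: cert_def Let_def LNlo_def LNup_def ATL_def ATU_def S_def PL_def PU_def eval_nat_numeral power2_eq_square\<close>)

lemma grid_29: assumes "16353/16384 \<le> a" "a \<le> 17513/16384"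
  shows "pi/2 * arcsin (2*a/(1+2*a)) \<le> II a"
  by (rule GRID[of "16353/16384" a "17513/16384" "147/64"])
     (use assms in \<open>simp_all add: cert_def Let_def LNlo_def LNup_def ATL_def ATU_def S_def PL_def PU_def eval_nat_numeral power2_eq_square\<close>)

lemma grid_30: assumes "17513/16384 \<le> a" "a \<le> 297/256"
  shows "pi/2 * arcsin (2*a/(1+2*a)) \<le> II a"
  by (rule GRID[of "17513/16384" a "297/256" "19/8"])
     (use assms in \<open>simp_all add: cert_def Let_def LNlo_def LNup_def ATL_def ATU_def S_def PL_def PU_def eval_nat_numeral power2_eq_square\<close>)

lemma grid_31: assumes "297/256 \<le> a" "a \<le> 20553/16384"
  shows "pi/2 * arcsin (2*a/(1+2*a)) \<le> II a"
  by (rule GRID[of "297/256" a "20553/16384" "157/64"])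
     (use assms in \<open>simp_all add: cert_def Let_def LNlo_def LNup_def ATL_def ATU_def S_def PL_def PU_def eval_nat_numeral power2_eq_square\<close>)

lemma grid_32: assumes "20553/16384 \<le> a" "a \<le> 22473/16384"
  shows "pi/2 * arcsin (2*a/(1+2*a)) \<le> II a"
  by (rule GRID[of "20553/16384" a "22473/16384" "163/64"])
     (use assms in \<open>simp_all add: cert_def Let_def LNlo_def LNup_def ATL_def ATU_def S_def PL_def PU_def eval_nat_numeral power2_eq_square\<close>)

lemma grid_33: assumes "22473/16384 \<le> a" "a \<le> 6201/4096"
  shows "pi/2 * arcsin (2*a/(1+2*a)) \<le> II a"
  by (rule GRID[of "22473/16384" a "6201/4096" "85/32"])
     (use assms in \<open>simp_all add: cert_def Let_def LNlo_def LNup_def ATL_def ATU_def S_def PL_def PU_def eval_nat_numeral power2_eq_square\<close>)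

lemma grid_34: assumes "6201/4096 \<le> a" "a \<le> 6897/4096"
  shows "pi/2 * arcsin (2*a/(1+2*a)) \<le> II a"
  by (rule GRID[of "6201/4096" a "6897/4096" "89/32"])
     (use assms in \<open>simp_all add: cert_def Let_def LNlo_def LNup_def ATL_def ATU_def S_def PL_def PU_def eval_nat_numeral power2_eq_square\<close>)

lemma grid_35: assumes "6897/4096 \<le> a" "a \<le> 1953/1024"
  shows "pi/2 * arcsin (2*a/(1+2*a)) \<le> II a"
  by (rule GRID[of "6897/4096" a "1953/1024" "47/16"])
     (use assms in \<open>simp_all add: cert_def Let_def LNlo_def LNup_def ATL_def ATU_def S_def PL_def PU_def eval_nat_numeral power2_eq_square\<close>)

lemma grid_36: assumes "1953/1024 \<le> a" "a \<le> 36305/16384"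
  shows "pi/2 * arcsin (2*a/(1+2*a)) \<le> II a"
  by (rule GRID[of "1953/1024" a "36305/16384" "201/64"])
     (use assms in \<open>simp_all add: cert_def Let_def LNlo_def LNup_def ATL_def ATU_def S_def PL_def PU_def eval_nat_numeral power2_eq_square\<close>)

lemma grid_37: assumes "36305/16384 \<le> a" "a \<le> 10857/4096"
  shows "pi/2 * arcsin (2*a/(1+2*a)) \<le> II a"
  by (rule GRID[of "36305/16384" a "10857/4096" "109/32"])
     (use assms in \<open>simp_all add: cert_def Let_def LNlo_def LNup_def ATL_def ATU_def S_def PL_def PU_def eval_nat_numeral power2_eq_square\<close>)

lemma grid_38: assumes "10857/4096 \<le> a" "a \<le> 13617/4096"
  shows "pi/2 * arcsin (2*a/(1+2*a)) \<le> II a"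
  by (rule GRID[of "10857/4096" a "13617/4096" "121/32"])
     (use assms in \<open>simp_all add: cert_def Let_def LNlo_def LNup_def ATL_def ATU_def S_def PL_def PU_def eval_nat_numeral power2_eq_square\<close>)

lemma grid_39: assumes "13617/4096 \<le> a" "a \<le> 72633/16384"
  shows "pi/2 * arcsin (2*a/(1+2*a)) \<le> II a"
  by (rule GRID[of "13617/4096" a "72633/16384" "277/64"])
     (use assms in \<open>simp_all add: cert_def Let_def LNlo_def LNup_def ATL_def ATU_def S_def PL_def PU_def eval_nat_numeral power2_eq_square\<close>)

lemma grid_40: assumes "72633/16384 \<le> a" "a \<le> 105465/16384"
  shows "pi/2 * arcsin (2*a/(1+2*a)) \<le> II a"
  by (rule GRID[of "72633/16384" a "105465/16384" "331/64"])
     (use assms in \<open>simp_all add: cert_def Let_def LNlo_def LNup_def ATL_def ATU_def S_def PL_def PU_def eval_nat_numeral power2_eq_square\<close>)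

lemma grid_41: assumes "105465/16384 \<le> a" "a \<le> 2745/256"
  shows "pi/2 * arcsin (2*a/(1+2*a)) \<le> II a"
  by (rule GRID[of "105465/16384" a "2745/256" "53/8"])
     (use assms in \<open>simp_all add: cert_def Let_def LNlo_def LNup_def ATL_def ATU_def S_def PL_def PU_def eval_nat_numeral power2_eq_square\<close>)

lemma grid_42: assumes "2745/256 \<le> a" "a \<le> 63/4"
  shows "pi/2 * arcsin (2*a/(1+2*a)) \<le> II a"
  by (rule GRID[of "2745/256" a "63/4" "8"])
     (use assms in \<open>simp_all add: cert_def Let_def LNlo_def LNup_def ATL_def ATU_def S_def PL_def PU_def eval_nat_numeral power2_eq_square\<close>)

lemma chain_42: assumes "2745/256 \<le> a" "a \<le> 63/4"
  shows "pi/2 * arcsin (2*a/(1+2*a)) \<le> II a"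
  using grid_42 assms by blast

lemma chain_41: assumes "105465/16384 \<le> a" "a \<le> 63/4"
  shows "pi/2 * arcsin (2*a/(1+2*a)) \<le> II a"
proof (cases "a \<le> 2745/256")
  case True thus ?thesis using grid_41 assms by blast
next
  case False thus ?thesis using chain_42 assms by simp
qed

lemma chain_40: assumes "72633/16384 \<le> a" "a \<le> 63/4"
  shows "pi/2 * arcsin (2*a/(1+2*a)) \<le> II a"
proof (cases "a \<le> 105465/16384")
  case True thus ?thesis using grid_40 assms by blast
next
  case False thus ?thesis using chain_41 assms by simp
qed

lemma chain_39: assumes "13617/4096 \<le> a" "a \<le> 63/4"
  shows "pi/2 * arcsin (2*a/(1+2*a)) \<le> II a"
proof (cases "a \<le> 72633/16384")
  case True thus ?thesis using grid_39 assms by blast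
next
  case False thus ?thesis using chain_40 assms by simp
qed

lemma chain_38: assumes "10857/4096 \<le> a" "a \<le> 63/4"
  shows "pi/2 * arcsin (2*a/(1+2*a)) \<le> II a"
proof (cases "a \<le> 13617/4096")
  case True thus ?thesis using grid_38 assms by blast
next
  case False thus ?thesis using chain_39 assms by simp
qed

lemma chain_37: assumes "36305/16384 \<le> a" "a \<le> 63/4"
  shows "pi/2 * arcsin (2*a/(1+2*a)) \<le> II a"
proof (cases "a \<le> 10857/4096")
  case True thus ?thesis using grid_37 assms by blast
next
  case False thus ?thesis using chain_38 assms by simp
qed

lemma chain_36: assumes "1953/1024 \<le> a" "a \<le> 63/4"
  shows "pi/2 * arcsin (2*a/(1+2*a)) \<le> II a"
proof (cases "a \<le> 36305/16384")
  case True thus ?thesis using grid_36 assms by blast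
next
  case False thus ?thesis using chain_37 assms by simp
qed

lemma chain_35: assumes "6897/4096 \<le> a" "a \<le> 63/4"
  shows "pi/2 * arcsin (2*a/(1+2*a)) \<le> II a"
proof (cases "a \<le> 1953/1024")
  case True thus ?thesis using grid_35 assms by blast
next
  case False thus ?thesis using chain_36 assms by simp
qed

lemma chain_34: assumes "6201/4096 \<le> a" "a \<le> 63/4"
  shows "pi/2 * arcsin (2*a/(1+2*a)) \<le> II a"
proof (cases "a \<le> 6897/4096")
  case True thus ?thesis using grid_34 assms by blast
next
  case False thus ?thesis using chain_35 assms by simp
qed

lemma chain_33: assumes "22473/16384 \<le> a" "a \<le> 63/4"
  shows "pi/2 * arcsin (2*a/(1+2*a)) \<le> II a"
proof (cases "a \<le> 6201/4096")
  case True thus ?thesis using grid_33 assms by blast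
next
  case False thus ?thesis using chain_34 assms by simp
qed

lemma chain_32: assumes "20553/16384 \<le> a" "a \<le> 63/4"
  shows "pi/2 * arcsin (2*a/(1+2*a)) \<le> II a"
proof (cases "a \<le> 22473/16384")
  case True thus ?thesis using grid_32 assms by blast
next
  case False thus ?thesis using chain_33 assms by simp
qed

lemma chain_31: assumes "297/256 \<le> a" "a \<le> 63/4"
  shows "pi/2 * arcsin (2*a/(1+2*a)) \<le> II a"
proof (cases "a \<le> 20553/16384")
  case True thus ?thesis using grid_31 assms by blast
next
  case False thus ?thesis using chain_32 assms by simp
qed

lemma chain_30: assumes "17513/16384 \<le> a" "a \<le> 63/4"
  shows "pi/2 * arcsin (2*a/(1+2*a)) \<le> II a"
proof (cases "a \<le> 297/256")
  case True thus ?thesis using grid_30 assms by blast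
next
  case False thus ?thesis using chain_31 assms by simp
qed

lemma chain_29: assumes "16353/16384 \<le> a" "a \<le> 63/4"
  shows "pi/2 * arcsin (2*a/(1+2*a)) \<le> II a"
proof (cases "a \<le> 17513/16384")
  case True thus ?thesis using grid_29 assms by blast
next
  case False thus ?thesis using chain_30 assms by simp
qed

lemma chain_28: assumes "15225/16384 \<le> a" "a \<le> 63/4"
  shows "pi/2 * arcsin (2*a/(1+2*a)) \<le> II a"
proof (cases "a \<le> 16353/16384")
  case True thus ?thesis using grid_28 assms by blast
next
  case False thus ?thesis using chain_29 assms by simp
qed

lemma chain_27: assumes "225/256 \<le> a" "a \<le> 63/4"
  shows "pi/2 * arcsin (2*a/(1+2*a)) \<le> II a"
proof (cases "a \<le> 15225/16384")
  case True thus ?thesis using grid_27 assms by blast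
next
  case False thus ?thesis using chain_28 assms by simp
qed

lemma chain_26: assumes "13593/16384 \<le> a" "a \<le> 63/4"
  shows "pi/2 * arcsin (2*a/(1+2*a)) \<le> II a"
proof (cases "a \<le> 225/256")
  case True thus ?thesis using grid_26 assms by blast
next
  case False thus ?thesis using chain_27 assms by simp
qed

lemma chain_25: assumes "3201/4096 \<le> a" "a \<le> 63/4"
  shows "pi/2 * arcsin (2*a/(1+2*a)) \<le> II a"
proof (cases "a \<le> 13593/16384")
  case True thus ?thesis using grid_25 assms by blast
next
  case False thus ?thesis using chain_26 assms by simp
qed

lemma chain_24: assumes "12033/16384 \<le> a" "a \<le> 63/4"
  shows "pi/2 * arcsin (2*a/(1+2*a)) \<le> II a"
proof (cases "a \<le> 3201/4096")
  case True thus ?thesis using grid_24 assms by blast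
next
  case False thus ?thesis using chain_25 assms by simp
qed

lemma chain_23: assumes "705/1024 \<le> a" "a \<le> 63/4"
  shows "pi/2 * arcsin (2*a/(1+2*a)) \<le> II a"
proof (cases "a \<le> 12033/16384")
  case True thus ?thesis using grid_23 assms by blast
next
  case False thus ?thesis using chain_24 assms by simp
qed

lemma chain_22: assumes "10545/16384 \<le> a" "a \<le> 63/4"
  shows "pi/2 * arcsin (2*a/(1+2*a)) \<le> II a"
proof (cases "a \<le> 705/1024")
  case True thus ?thesis using grid_22 assms by blast
next
  case False thus ?thesis using chain_23 assms by simp
qed

lemma chain_21: assumes "2457/4096 \<le> a" "a \<le> 63/4"
  shows "pi/2 * arcsin (2*a/(1+2*a)) \<le> II a"
proof (cases "a \<le> 10545/16384")
  case True thus ?thesis using grid_21 assms by blast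
next
  case False thus ?thesis using chain_22 assms by simp
qed

lemma chain_20: assumes "585/1024 \<le> a" "a \<le> 63/4"
  shows "pi/2 * arcsin (2*a/(1+2*a)) \<le> II a"
proof (cases "a \<le> 2457/4096")
  case True thus ?thesis using grid_20 assms by blast
next
  case False thus ?thesis using chain_21 assms by simp
qed

lemma chain_19: assumes "2225/4096 \<le> a" "a \<le> 63/4"
  shows "pi/2 * arcsin (2*a/(1+2*a)) \<le> II a"
proof (cases "a \<le> 585/1024")
  case True thus ?thesis using grid_19 assms by blast
next
  case False thus ?thesis using chain_20 assms by simp
qed

lemma chain_18: assumes "33/64 \<le> a" "a \<le> 63/4"
  shows "pi/2 * arcsin (2*a/(1+2*a)) \<le> II a"
proof (cases "a \<le> 2225/4096")
  case True thus ?thesis using grid_18 assms by blast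
next
  case False thus ?thesis using chain_19 assms by simp
qed

lemma chain_17: assumes "2001/4096 \<le> a" "a \<le> 63/4"
  shows "pi/2 * arcsin (2*a/(1+2*a)) \<le> II a"
proof (cases "a \<le> 33/64")
  case True thus ?thesis using grid_17 assms by blast
next
  case False thus ?thesis using chain_18 assms by simp
qed

lemma chain_16: assumes "473/1024 \<le> a" "a \<le> 63/4"
  shows "pi/2 * arcsin (2*a/(1+2*a)) \<le> II a"
proof (cases "a \<le> 2001/4096")
  case True thus ?thesis using grid_16 assms by blast
next
  case False thus ?thesis using chain_17 assms by simp
qed

lemma chain_15: assumes "1785/4096 \<le> a" "a \<le> 63/4"
  shows "pi/2 * arcsin (2*a/(1+2*a)) \<le> II a"
proof (cases "a \<le> 473/1024")
  case True thus ?thesis using grid_15 assms by blast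
next
  case False thus ?thesis using chain_16 assms by simp
qed

lemma chain_14: assumes "105/256 \<le> a" "a \<le> 63/4"
  shows "pi/2 * arcsin (2*a/(1+2*a)) \<le> II a"
proof (cases "a \<le> 1785/4096")
  case True thus ?thesis using grid_14 assms by blast
next
  case False thus ?thesis using chain_15 assms by simp
qed

lemma chain_13: assumes "1577/4096 \<le> a" "a \<le> 63/4"
  shows "pi/2 * arcsin (2*a/(1+2*a)) \<le> II a"
proof (cases "a \<le> 105/256")
  case True thus ?thesis using grid_13 assms by blast
next
  case False thus ?thesis using chain_14 assms by simp
qed

lemma chain_12: assumes "369/1024 \<le> a" "a \<le> 63/4"
  shows "pi/2 * arcsin (2*a/(1+2*a)) \<le> II a"
proof (cases "a \<le> 1577/4096")
  case True thus ?thesis using grid_12 assms by blast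
next
  case False thus ?thesis using chain_13 assms by simp
qed

lemma chain_11: assumes "1377/4096 \<le> a" "a \<le> 63/4"
  shows "pi/2 * arcsin (2*a/(1+2*a)) \<le> II a"
proof (cases "a \<le> 369/1024")
  case True thus ?thesis using grid_11 assms by blast
next
  case False thus ?thesis using chain_12 assms by simp
qed

lemma chain_10: assumes "4929/16384 \<le> a" "a \<le> 63/4"
  shows "pi/2 * arcsin (2*a/(1+2*a)) \<le> II a"
proof (cases "a \<le> 1377/4096")
  case True thus ?thesis using grid_10 assms by blast
next
  case False thus ?thesis using chain_11 assms by simp
qed

lemma chain_9: assumes "273/1024 \<le> a" "a \<le> 63/4"
  shows "pi/2 * arcsin (2*a/(1+2*a)) \<le> II a"
proof (cases "a \<le> 4929/16384")
  case True thus ?thesis using grid_9 assms by blast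
next
  case False thus ?thesis using chain_10 assms by simp
qed

lemma chain_8: assumes "3825/16384 \<le> a" "a \<le> 63/4"
  shows "pi/2 * arcsin (2*a/(1+2*a)) \<le> II a"
proof (cases "a \<le> 273/1024")
  case True thus ?thesis using grid_8 assms by blast
next
  case False thus ?thesis using chain_9 assms by simp
qed

lemma chain_7: assumes "825/4096 \<le> a" "a \<le> 63/4"
  shows "pi/2 * arcsin (2*a/(1+2*a)) \<le> II a"
proof (cases "a \<le> 3825/16384")
  case True thus ?thesis using grid_7 assms by blast
next
  case False thus ?thesis using chain_8 assms by simp
qed

lemma chain_6: assumes "185/1024 \<le> a" "a \<le> 63/4"
  shows "pi/2 * arcsin (2*a/(1+2*a)) \<le> II a"
proof (cases "a \<le> 825/4096")
  case True thus ?thesis using grid_6 assms by blast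
next
  case False thus ?thesis using chain_7 assms by simp
qed

lemma chain_5: assumes "657/4096 \<le> a" "a \<le> 63/4"
  shows "pi/2 * arcsin (2*a/(1+2*a)) \<le> II a"
proof (cases "a \<le> 185/1024")
  case True thus ?thesis using grid_5 assms by blast
next
  case False thus ?thesis using chain_6 assms by simp
qed

lemma chain_4: assumes "9/64 \<le> a" "a \<le> 63/4"
  shows "pi/2 * arcsin (2*a/(1+2*a)) \<le> II a"
proof (cases "a \<le> 657/4096")
  case True thus ?thesis using grid_4 assms by blast
next
  case False thus ?thesis using chain_5 assms by simp
qed

lemma chain_3: assumes "497/4096 \<le> a" "a \<le> 63/4"
  shows "pi/2 * arcsin (2*a/(1+2*a)) \<le> II a"
proof (cases "a \<le> 9/64")
  case True thus ?thesis using grid_3 assms by blast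
next
  case False thus ?thesis using chain_4 assms by simp
qed

lemma chain_2: assumes "105/1024 \<le> a" "a \<le> 63/4"
  shows "pi/2 * arcsin (2*a/(1+2*a)) \<le> II a"
proof (cases "a \<le> 497/4096")
  case True thus ?thesis using grid_2 assms by blast
next
  case False thus ?thesis using chain_3 assms by simp
qed

lemma chain_1: assumes "345/4096 \<le> a" "a \<le> 63/4"
  shows "pi/2 * arcsin (2*a/(1+2*a)) \<le> II a"
proof (cases "a \<le> 105/1024")
  case True thus ?thesis using grid_1 assms by blast
next
  case False thus ?thesis using chain_2 assms by simp
qed

lemma chain_0: assumes "17/256 \<le> a" "a \<le> 63/4"
  shows "pi/2 * arcsin (2*a/(1+2*a)) \<le> II a"
proof (cases "a \<le> 345/4096")
  case True thus ?thesis using grid_0 assms by blast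
next
  case False thus ?thesis using chain_1 assms by simp
qed

lemma main_ineq:
  fixes a :: real assumes a: "0 < a"
  shows "pi/2 * arcsin (2*a/(1+2*a)) \<le> II a"
proof (cases "a \<le> 17/256")
  case True thus ?thesis using small_tail a by blast
next
  case F1: False
  show ?thesis
  proof (cases "63/4 \<le> a")
    case True thus ?thesis using large_tail by blast
  next
    case False thus ?thesis using chain_0 F1 by simp
  qed
qed

theorem lemma4:
  fixes z :: real
  assumes "0 \<le> z" and "z \<le> 1"
  shows "P_chi2 z \<le> P_chi1 z"
proof -
  consider "z = 0" | "z = 1" | "0 < z" "z < 1" using assms by linarith
  thus ?thesis
  proof cases
    case 1
    thus ?thesis by (simp add: P_chi1_def P_chi2_def)
  next
    case 2
    thus ?thesis by (simp add: P_chi1_def P_chi2_def)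
  next
    case 3
    define a where "a = z / (2 - 2*z)"
    have a0: "0 < a" using 3 by (simp add: a_def)
    have za: "2*a/(1+2*a) = z" using 3 by (simp add: a_def field_simps)
    have "pi/2 * arcsin z \<le> II a" using main_ineq[OF a0] za by simp
    hence "2/pi^2 * (pi/2 * arcsin z) \<le> 2/pi^2 * II a" by (intro mult_left_mono) simp_all
    moreover have "2/pi^2 * (pi/2 * arcsin z) = arcsin z / pi" by (simp add: power2_eq_square field_simps)
    ultimately have h: "arcsin z / pi \<le> 2/pi^2 * II a" by simp
    have ac: "arccos z = pi/2 - arcsin z" using 3 by (intro arccos_arcsin_eq) auto
    have "P_chi2 z = 1/2 - 2/pi^2 * II a" using 3 by (simp add: P_chi2_def II_def a_def)
    moreover have "P_chi1 z = 1/2 - arcsin z / pi" by (simp add: P_chi1_def ac field_simps)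
    ultimately show ?thesis using h by simp
  qed
qed

end
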